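(* Suppose that a group $G$ acts geometrically on a CAT(0) space $X$ with fixed basepoint $x_0$ and $|\partial X|>2$. Assume that there exists a constant $M>0$ such that for any $\alpha,\beta\in\partial X$ with $\alpha\neq\beta$, there exist a sequence $\{g_i\}\subset G$ and a point $y_0\in X$ such that $d(y_0,g_ix_0)\to\infty$ as $i\to\infty$ and for every $i\in\mathbb{N}$, $$\operatorname{Im}\xi_{g_ix_0,\alpha}\cap B(y_0,M)\neq\emptyset\quad\text{and}\quad\operatorname{Im}\xi_{g_ix_0,\beta}\cap B(y_0,M)\neq\emptyset.$$ Then the boundary $\partial X$ is a scrambled set.
   Context: A geometric action is an action by isometries which is proper and cocompact. $\partial X$ is the visual boundary of $X$, on which $G$ acts by homeomorphisms. For $x\in X$ and $\alpha\in\partial X$, $\xi_{x,\alpha}$ denotes the unique geodesic ray with $\xi_{x,\alpha}(0)=x$ and $\xi_{x,\alpha}(\infty)=\alpha$; $B(y_0,M)$ is the closed ball. The metric on $\partial X$ is $d_{\partial X}(\alpha,\beta)=\sum_{i=1}^\infty\min\{d(\xi_{x_0,\alpha}(i),\xi_{x_0,\beta}(i)),\,2^{-i}\}$. $\partial X$ is a scrambled set if for all $\alpha\neq\beta$ in $\partial X$, $\limsup\{d_{\partial X}(g\alpha,g\beta)\mid g\in G\}>0$ and $\liminf\{d_{\partial X}(g\alpha,g\beta)\mid g\in G\}=0$, where limsup/liminf are taken as $g$ leaves every finite subset of $G$. *)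

theory Defs
  imports "HOL-Analysis.Analysis" "HOL-Algebra.Group_Action" "HOL-Library.Liminf_Limsup"
begin

text \<open>The metric space X is the whole type 'a (a metric_space).\<close>

definition geodesic_seg :: "(real \<Rightarrow> 'a::metric_space) \<Rightarrow> 'a \<Rightarrow> 'a \<Rightarrow> bool" where
  "geodesic_seg c p q \<longleftrightarrow> c 0 = p \<and> c (dist p q) = q \<and>
     (\<forall>s\<in>{0..dist p q}. \<forall>t\<in>{0..dist p q}. dist (c s) (c t) = \<bar>s - t\<bar>)"

definition geodesic_space :: "'a::metric_space itself \<Rightarrow> bool" where
  "geodesic_space _ \<longleftrightarrow> (\<forall>p q::'a. \<exists>c. geodesic_seg c p q)"

text \<open>CAT(0) inequality: for a geodesic triangle with vertices p, q, r and sides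
  c1 = [p,q], c2 = [q,r], and a Euclidean comparison triangle P, Q, R in the plane
  (complex numbers) with the same side lengths, the distance between a point of
  c1 and a point of c2 is at most that between the comparison points.
  (Pairs of points on other pairs of sides are covered by relabelling the triangle,
  pairs on the same side are trivial.)\<close>

definition CAT0 :: "'a::metric_space itself \<Rightarrow> bool" where
  "CAT0 T \<longleftrightarrow> geodesic_space T \<and>
    (\<forall>(p::'a) q r c1 c2 (P::complex) Q R.
       geodesic_seg c1 p q \<longrightarrow> geodesic_seg c2 q r \<longrightarrow>
       cmod (P - Q) = dist p q \<longrightarrow> cmod (Q - R) = dist q r \<longrightarrow> cmod (R - P) = dist r p \<longrightarrow>
       (\<forall>s\<in>{0..dist p q}. \<forall>t\<in>{0..dist q r}.
          dist (c1 s) (c2 t) \<le> cmod ((P + of_real s * sgn (Q - P)) - (Q + of_real t * sgn (R - Q)))))"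

definition proper_space :: "'a::metric_space itself \<Rightarrow> bool" where
  "proper_space _ \<longleftrightarrow> (\<forall>(x::'a) r. compact (cball x r))"

text \<open>A geodesic ray is parametrised on [0,\<infinity>); for definiteness it is extended
  constantly to negative times.\<close>

definition geodesic_ray :: "(real \<Rightarrow> 'a::metric_space) \<Rightarrow> bool" where
  "geodesic_ray c \<longleftrightarrow> (\<forall>s\<ge>0. \<forall>t\<ge>0. dist (c s) (c t) = \<bar>s - t\<bar>) \<and> (\<forall>t<0. c t = c 0)"

definition asymptotic :: "((real \<Rightarrow> 'a::metric_space) \<times> (real \<Rightarrow> 'a)) set" where
  "asymptotic = {(c, c'). geodesic_ray c \<and> geodesic_ray c' \<and>
                          (\<exists>B. \<forall>t\<ge>0. dist (c t) (c' t) \<le> B)}"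

definition visual_boundary :: "'a::metric_space itself \<Rightarrow> (real \<Rightarrow> 'a) set set" where
  "visual_boundary _ = {c. geodesic_ray c} // asymptotic"

text \<open>\<xi>_{x,\<alpha>}: the geodesic ray issuing from x in the class \<alpha>.\<close>
definition ray_to :: "'a::metric_space \<Rightarrow> (real \<Rightarrow> 'a) set \<Rightarrow> (real \<Rightarrow> 'a)" where
  "ray_to x \<alpha> = (THE c. c \<in> \<alpha> \<and> c 0 = x)"

definition boundary_act :: "('g \<Rightarrow> 'a \<Rightarrow> 'a) \<Rightarrow> 'g \<Rightarrow> (real \<Rightarrow> 'a) set \<Rightarrow> (real \<Rightarrow> 'a) set" where
  "boundary_act act g \<alpha> = (\<lambda>c. act g \<circ> c) ` \<alpha>"

definition boundary_dist :: "'a::metric_space \<Rightarrow> (real \<Rightarrow> 'a) set \<Rightarrow> (real \<Rightarrow> 'a) set \<Rightarrow> real" where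
  "boundary_dist x0 \<alpha> \<beta> =
     (\<Sum>i. min (dist (ray_to x0 \<alpha> (real (Suc i))) (ray_to x0 \<beta> (real (Suc i)))) ((1/2) ^ Suc i))"

definition isometric_action :: "('g, 'b) monoid_scheme \<Rightarrow> ('g \<Rightarrow> 'a::metric_space \<Rightarrow> 'a) \<Rightarrow> bool" where
  "isometric_action G act \<longleftrightarrow> group_action G UNIV act \<and>
     (\<forall>g\<in>carrier G. \<forall>x y. dist (act g x) (act g y) = dist x y)"

definition proper_action :: "('g, 'b) monoid_scheme \<Rightarrow> ('g \<Rightarrow> 'a::metric_space \<Rightarrow> 'a) \<Rightarrow> bool" where
  "proper_action G act \<longleftrightarrow>
     (\<forall>K. compact K \<longrightarrow> finite {g \<in> carrier G. act g ` K \<inter> K \<noteq> {}})"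

definition cocompact_action :: "('g, 'b) monoid_scheme \<Rightarrow> ('g \<Rightarrow> 'a::metric_space \<Rightarrow> 'a) \<Rightarrow> bool" where
  "cocompact_action G act \<longleftrightarrow> (\<exists>K. compact K \<and> (\<Union>g\<in>carrier G. act g ` K) = UNIV)"

definition geometric_action :: "('g, 'b) monoid_scheme \<Rightarrow> ('g \<Rightarrow> 'a::metric_space \<Rightarrow> 'a) \<Rightarrow> bool" where
  "geometric_action G act \<longleftrightarrow> isometric_action G act \<and> proper_action G act \<and> cocompact_action G act"

text \<open>Limits as g leaves every finite subset of G: the filter cofinite restricted to carrier G.\<close>
definition leaving_finite :: "('g, 'b) monoid_scheme \<Rightarrow> 'g filter" where
  "leaving_finite G = inf cofinite (principal (carrier G))"

definition scrambled_boundary ::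
  "('g, 'b) monoid_scheme \<Rightarrow> ('g \<Rightarrow> 'a::metric_space \<Rightarrow> 'a) \<Rightarrow> 'a \<Rightarrow> bool" where
  "scrambled_boundary G act x0 \<longleftrightarrow>
     (\<forall>\<alpha>\<in>visual_boundary TYPE('a). \<forall>\<beta>\<in>visual_boundary TYPE('a). \<alpha> \<noteq> \<beta> \<longrightarrow>
        Limsup (leaving_finite G)
          (\<lambda>g. ereal (boundary_dist x0 (boundary_act act g \<alpha>) (boundary_act act g \<beta>))) > 0 \<and>
        Liminf (leaving_finite G)
          (\<lambda>g. ereal (boundary_dist x0 (boundary_act act g \<alpha>) (boundary_act act g \<beta>))) = 0)"

end

theory Submission
  imports Defs
begin

lemma geodesic_seg_rev:
  assumes "geodesic_seg c p q"
  shows "geodesic_seg (\<lambda>s. c (dist p q - s)) q p"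
proof -
  have a: "c 0 = p" "c (dist p q) = q"
    and b: "\<And>s t. s\<in>{0..dist p q} \<Longrightarrow> t\<in>{0..dist p q} \<Longrightarrow> dist (c s) (c t) = \<bar>s - t\<bar>"
    using assms unfolding geodesic_seg_def by auto
  show ?thesis unfolding geodesic_seg_def
  proof (intro conjI ballI)
    fix s t assume "s \<in> {0..dist q p}" "t \<in> {0..dist q p}"
    then show "dist (c (dist p q - s)) (c (dist p q - t)) = \<bar>s - t\<bar>"
      using b[of "dist p q - s" "dist p q - t"] by (simp add: dist_commute)
  qed (use a in \<open>auto simp: dist_commute\<close>)
qed

lemma geodesic_seg_dist:
  assumes "geodesic_seg c p q" "0 \<le> s" "s \<le> dist p q" "0 \<le> t" "t \<le> dist p q"
  shows "dist (c s) (c t) = \<bar>s - t\<bar>"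
  using assms unfolding geodesic_seg_def by auto

lemma geodesic_seg_sub:
  assumes "geodesic_seg c p q" "0 \<le> s" "s \<le> dist p q"
  shows "geodesic_seg c p (c s)"
proof -
  have c0: "c 0 = p" using assms(1) unfolding geodesic_seg_def by blast
  have "dist (c 0) (c s) = \<bar>0 - s\<bar>"
    using geodesic_seg_dist[OF assms(1), of 0 s] assms(2,3) by simp
  then have d: "dist p (c s) = s" using c0 assms(2) by simp
  show ?thesis using assms unfolding geodesic_seg_def d by force
qed

lemma comp_tri_exists:
  fixes A B C :: real
  assumes "0 \<le> A" "0 \<le> B" "0 \<le> C" "C \<le> A + B" "A \<le> B + C" "B \<le> A + C"
  shows "\<exists>R::complex. cmod R = A \<and> cmod (R - complex_of_real B) = C"
proof (cases "B = 0")
  case True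
  then have "A = C" using assms by linarith
  then show ?thesis using True assms by (intro exI[of _ "complex_of_real A"]) auto
next
  case False
  then have Bp: "B > 0" using assms by auto
  define x where "x = (A^2 + B^2 - C^2) / (2*B)"
  have h1: "(A^2 + B^2 - C^2) \<le> 2*A*B"
  proof -
    have "\<bar>A - B\<bar> \<le> \<bar>C\<bar>" using assms by (auto simp: abs_le_iff)
    then have "(A - B)^2 \<le> C^2" by (simp only: abs_le_square_iff)
    then show ?thesis by (simp add: power2_eq_square algebra_simps)
  qed
  have h2: "-(2*A*B) \<le> (A^2 + B^2 - C^2)"
  proof -
    have "C^2 \<le> (A + B)^2" using assms by (intro power_mono) auto
    then show ?thesis by (simp add: power2_eq_square algebra_simps)
  qed
  have "x \<le> A" unfolding x_def using h1 Bp by (simp add: divide_le_eq mult.commute mult.left_commute)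
  moreover have "-A \<le> x" unfolding x_def using h2 Bp by (simp add: le_divide_eq mult.commute mult.left_commute)
  ultimately have "\<bar>x\<bar> \<le> \<bar>A\<bar>" using assms by (simp add: abs_le_iff)
  then have xA: "x^2 \<le> A^2" by (simp only: abs_le_square_iff)
  define y where "y = sqrt (A^2 - x^2)"
  have y2: "y^2 = A^2 - x^2" unfolding y_def using xA by simp
  define R where "R = Complex x y"
  have "(cmod R)^2 = A^2" unfolding R_def cmod_def using y2 by simp
  then have "cmod R = A" using assms by (simp add: power2_eq_iff_nonneg)
  moreover have "(cmod (R - complex_of_real B))^2 = C^2"
  proof -
    have "(cmod (R - complex_of_real B))^2 = (x - B)^2 + y^2"
      unfolding R_def cmod_def by (simp add: complex_of_real_def)
    also have "\<dots> = A^2 - 2*x*B + B^2" using y2 by (simp add: power2_eq_square algebra_simps)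
    also have "2*x*B = A^2 + B^2 - C^2" unfolding x_def using Bp by simp
    finally show ?thesis by simp
  qed
  then have "cmod (R - complex_of_real B) = C" using assms(3) norm_ge_zero power2_eq_iff_nonneg by metis
  ultimately show ?thesis by blast
qed

lemma cat0_geodesic_space: "CAT0 TYPE('a::metric_space) \<Longrightarrow> \<exists>c. geodesic_seg c (p::'a) q"
  unfolding CAT0_def geodesic_space_def by (elim conjE) (rule spec, rule spec)

lemma cat0_L1:
  fixes a b c :: "'a::metric_space"
  assumes cat: "CAT0 TYPE('a)" and g1: "geodesic_seg s1 a b" and g2: "geodesic_seg s2 a c"
    and l: "0 \<le> l" "l \<le> 1"
  shows "dist (s1 (l * dist a b)) (s2 (l * dist a c)) \<le> l * dist b c"
proof -
  define B where "B = dist a b"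
  define A where "A = dist a c"
  define C where "C = dist b c"
  obtain R where R: "cmod R = A" "cmod (R - complex_of_real B) = C"
    using comp_tri_exists[of A B C] unfolding A_def B_def C_def
    by (metis dist_commute dist_triangle zero_le_dist add.commute)
  define c1 where "c1 = (\<lambda>s. s1 (dist a b - s))"
  have gc1: "geodesic_seg c1 b a" unfolding c1_def using geodesic_seg_rev[OF g1] .
  define P where "P = complex_of_real B"
  have key: "dist (c1 s) (s2 t) \<le> cmod ((P + of_real s * sgn (0 - P)) - (0 + of_real t * sgn (R - 0)))"
    if "s \<in> {0..dist b a}" "t \<in> {0..dist a c}" for s t
  proof -
    have H: "\<forall>s\<in>{0..dist b a}. \<forall>t\<in>{0..dist a c}.
          dist (c1 s) (s2 t) \<le> cmod ((P + of_real s * sgn (0 - P)) - (0 + of_real t * sgn (R - 0)))"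
      using cat[unfolded CAT0_def, THEN conjunct2, rule_format, of c1 b a s2 c P 0 R] gc1 g2 R
      by (simp add: P_def B_def A_def C_def dist_commute norm_minus_commute)
    show ?thesis using H that by blast
  qed
  have s_in: "(1 - l) * B \<in> {0..dist b a}" using l mult_left_le_one_le[of B "1-l"] by (simp add: B_def dist_commute)
  have t_in: "l * A \<in> {0..dist a c}" using l mult_left_le_one_le[of A l] by (simp add: A_def)
  have e1: "P + of_real ((1 - l) * B) * sgn (0 - P) = of_real l * P"
  proof (cases "B = 0")
    case True then show ?thesis by (simp add: P_def)
  next
    case False then have "B > 0" by (simp add: B_def)
    then show ?thesis by (simp add: P_def sgn_of_real algebra_simps)
  qed
  have e2: "of_real (l * A) * sgn (R - 0) = of_real l * R"
  proof (cases "A = 0")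
    case True then show ?thesis using R by simp
  next
    case False
    have "sgn R = of_real (1/A) * R" using R by (simp add: sgn_div_norm scaleR_conv_of_real divide_inverse mult.commute)
    then show ?thesis using False by (simp add: field_simps)
  qed
  have "dist (c1 ((1 - l) * B)) (s2 (l * A)) \<le> cmod (of_real l * P - of_real l * R)"
    using key[OF s_in t_in] unfolding e1 e2 by simp
  also have "\<dots> = cmod (of_real l * (P - R))" by (simp only: right_diff_distrib)
  also have "\<dots> = l * C" using l R unfolding norm_mult P_def
    by (simp add: norm_minus_commute)
  finally have fin: "dist (c1 ((1 - l) * B)) (s2 (l * A)) \<le> l * C" .
  have "c1 ((1 - l) * B) = s1 (l * dist a b)" unfolding c1_def B_def by (simp add: left_diff_distrib)
  then show ?thesis using fin unfolding A_def C_def by simp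
qed

lemma cat0_L2:
  fixes p b q e :: "'a::metric_space"
  assumes cat: "CAT0 TYPE('a)" and g1: "geodesic_seg s1 p b" and g2: "geodesic_seg s2 q e"
    and l: "0 \<le> l" "l \<le> 1"
  shows "dist (s1 (l * dist p b)) (s2 (l * dist q e)) \<le> (1 - l) * dist p q + l * dist b e"
proof -
  obtain m where gm: "geodesic_seg m p e" using cat0_geodesic_space[OF cat] by blast
  have i1: "dist (s1 (l * dist p b)) (m (l * dist p e)) \<le> l * dist b e"
    using cat0_L1[OF cat g1 gm l] .
  have gmr: "geodesic_seg (\<lambda>s. m (dist p e - s)) e p" using geodesic_seg_rev[OF gm] .
  have g2r: "geodesic_seg (\<lambda>s. s2 (dist q e - s)) e q" using geodesic_seg_rev[OF g2] .
  have l': "0 \<le> 1 - l" "1 - l \<le> 1" using l by auto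
  have i2: "dist (m (dist p e - (1 - l) * dist e p)) (s2 (dist q e - (1 - l) * dist e q)) \<le> (1 - l) * dist p q"
    using cat0_L1[OF cat gmr g2r l'] .
  have e1: "dist p e - (1 - l) * dist e p = l * dist p e" by (simp add: dist_commute algebra_simps)
  have e2: "dist q e - (1 - l) * dist e q = l * dist q e" by (simp add: dist_commute algebra_simps)
  have i2': "dist (m (l * dist p e)) (s2 (l * dist q e)) \<le> (1 - l) * dist p q"
    using i2 unfolding e1 e2 .
  show ?thesis using i1 i2' dist_triangle[of "s1 (l * dist p b)" "s2 (l * dist q e)" "m (l * dist p e)"]
    by linarith
qed

lemma ray_dist:
  assumes "geodesic_ray c" "0 \<le> s" "0 \<le> t"
  shows "dist (c s) (c t) = \<bar>s - t\<bar>"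
  using assms unfolding geodesic_ray_def by blast

lemma ray_seg:
  assumes "geodesic_ray c" "0 \<le> T"
  shows "geodesic_seg c (c 0) (c T)"
proof -
  have d: "dist (c 0) (c T) = T" using ray_dist[OF assms(1), of 0 T] assms(2) by simp
  show ?thesis unfolding geodesic_seg_def d
    using ray_dist[OF assms(1)] by (simp add: atLeastAtMost_iff)
qed

lemma ray_L1:
  fixes c c' :: "real \<Rightarrow> 'a::metric_space"
  assumes cat: "CAT0 TYPE('a)" and r: "geodesic_ray c" "geodesic_ray c'" and c0: "c 0 = c' 0"
    and t: "0 \<le> t" "t \<le> T" "0 < T"
  shows "dist (c t) (c' t) \<le> (t / T) * dist (c T) (c' T)"
proof -
  have g1: "geodesic_seg c (c 0) (c T)" using ray_seg[OF r(1)] t by simp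
  have g2: "geodesic_seg c' (c 0) (c' T)" using ray_seg[OF r(2)] t c0 by simp
  have d1: "dist (c 0) (c T) = T" using ray_dist[OF r(1), of 0 T] t by simp
  have d2: "dist (c 0) (c' T) = T" using ray_dist[OF r(2), of 0 T] t c0 by simp
  have l: "0 \<le> t / T" "t / T \<le> 1" using t by auto
  have "dist (c (t / T * dist (c 0) (c T))) (c' (t / T * dist (c 0) (c' T))) \<le> t / T * dist (c T) (c' T)"
    using cat0_L1[OF cat g1 g2 l] .
  then show ?thesis unfolding d1 d2 using t by simp
qed

lemma ray_L2:
  fixes c c' :: "real \<Rightarrow> 'a::metric_space"
  assumes cat: "CAT0 TYPE('a)" and r: "geodesic_ray c" "geodesic_ray c'"
    and t: "0 \<le> t" "t \<le> T" "0 < T"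
  shows "dist (c t) (c' t) \<le> (1 - t / T) * dist (c 0) (c' 0) + (t / T) * dist (c T) (c' T)"
proof -
  have g1: "geodesic_seg c (c 0) (c T)" using ray_seg[OF r(1)] t by simp
  have g2: "geodesic_seg c' (c' 0) (c' T)" using ray_seg[OF r(2)] t by simp
  have d1: "dist (c 0) (c T) = T" using ray_dist[OF r(1), of 0 T] t by simp
  have d2: "dist (c' 0) (c' T) = T" using ray_dist[OF r(2), of 0 T] t by simp
  have l: "0 \<le> t / T" "t / T \<le> 1" using t by auto
  have "dist (c (t / T * dist (c 0) (c T))) (c' (t / T * dist (c' 0) (c' T)))
     \<le> (1 - t / T) * dist (c 0) (c' 0) + t / T * dist (c T) (c' T)"
    using cat0_L2[OF cat g1 g2 l] .
  then show ?thesis unfolding d1 d2 using t by simp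
qed

lemma asym_nonincr:
  fixes c c' :: "real \<Rightarrow> 'a::metric_space"
  assumes cat: "CAT0 TYPE('a)" and a: "(c, c') \<in> asymptotic" and t: "0 \<le> t"
  shows "dist (c t) (c' t) \<le> dist (c 0) (c' 0)"
proof -
  have r: "geodesic_ray c" "geodesic_ray c'" using a unfolding asymptotic_def by auto
  obtain B where B: "\<And>s. s \<ge> 0 \<Longrightarrow> dist (c s) (c' s) \<le> B" using a unfolding asymptotic_def by auto
  have B0: "0 \<le> B" using B[of 0] zero_le_dist[of "c 0" "c' 0"] by linarith
  show ?thesis
  proof (rule field_le_epsilon)
    fix e :: real assume e: "0 < e"
    define T where "T = t + 1 + t * B / e"
    have tBe: "0 \<le> t * B / e" using t B0 e by simp
    have T: "0 < T" "t \<le> T" using tBe t unfolding T_def by auto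
    have "dist (c t) (c' t) \<le> (1 - t / T) * dist (c 0) (c' 0) + (t / T) * dist (c T) (c' T)"
      using ray_L2[OF cat r t T(2) T(1)] .
    also have "\<dots> \<le> dist (c 0) (c' 0) + (t / T) * B"
    proof -
      have "(1 - t / T) * dist (c 0) (c' 0) \<le> dist (c 0) (c' 0)"
        using T t by (simp add: mult_left_le_one_le)
      moreover have "(t / T) * dist (c T) (c' T) \<le> (t / T) * B"
        using B[of T] T t by (intro mult_left_mono) auto
      ultimately show ?thesis by linarith
    qed
    also have "(t / T) * B \<le> e"
    proof (cases "t = 0")
      case True then show ?thesis using e by simp
    next
      case False
      then have tp: "0 < t" using t by simp
      have "t * B \<le> e * T" unfolding T_def using e tp B0
        by (simp add: algebra_simps)
      then show ?thesis using T(1) by (simp add: divide_le_eq mult.commute)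
    qed
    finally show "dist (c t) (c' t) \<le> dist (c 0) (c' 0) + e" by simp
  qed
qed

lemma asym_unique:
  fixes c c' :: "real \<Rightarrow> 'a::metric_space"
  assumes cat: "CAT0 TYPE('a)" and a: "(c, c') \<in> asymptotic" and c0: "c 0 = c' 0"
  shows "c = c'"
proof
  fix t
  have r: "geodesic_ray c" "geodesic_ray c'" using a unfolding asymptotic_def by auto
  show "c t = c' t"
  proof (cases "t < 0")
    case True then show ?thesis using r c0 unfolding geodesic_ray_def by auto
  next
    case False
    then show ?thesis using asym_nonincr[OF cat a, of t] c0 by simp
  qed
qed

lemma equiv_asym: "equiv {c. geodesic_ray (c :: real \<Rightarrow> 'a::metric_space)} asymptotic"
proof (rule equivI)
  show "asymptotic \<subseteq> {c. geodesic_ray (c :: real \<Rightarrow> 'a)} \<times> {c. geodesic_ray c}"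
    unfolding asymptotic_def by auto
  show "refl_on {c. geodesic_ray (c :: real \<Rightarrow> 'a)} asymptotic"
    unfolding refl_on_def asymptotic_def by auto
  show "sym (asymptotic :: ((real \<Rightarrow> 'a) \<times> (real \<Rightarrow> 'a)) set)"
    unfolding sym_on_def asymptotic_def by (auto simp: dist_commute)
  show "trans (asymptotic :: ((real \<Rightarrow> 'a) \<times> (real \<Rightarrow> 'a)) set)"
  proof (rule transI)
    fix x y z :: "real \<Rightarrow> 'a" assume "(x, y) \<in> asymptotic" "(y, z) \<in> asymptotic"
    then obtain B1 B2 where "geodesic_ray x" "geodesic_ray y" "geodesic_ray z"
      "\<And>t. t \<ge> 0 \<Longrightarrow> dist (x t) (y t) \<le> B1" "\<And>t. t \<ge> 0 \<Longrightarrow> dist (y t) (z t) \<le> B2"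
      unfolding asymptotic_def by auto
    note h = this
    have "\<forall>t\<ge>0. dist (x t) (z t) \<le> B1 + B2"
    proof (intro allI impI)
      fix t :: real assume "0 \<le> t"
      then show "dist (x t) (z t) \<le> B1 + B2" using h(4)[of t] h(5)[of t] dist_triangle[of "x t" "z t" "y t"] by linarith
    qed
    then show "(x, z) \<in> asymptotic" unfolding asymptotic_def using h(1-3) by blast
  qed
qed

definition shift :: "real \<Rightarrow> (real \<Rightarrow> 'a) \<Rightarrow> real \<Rightarrow> 'a" where
  "shift a c = (\<lambda>t. c (a + max 0 t))"

lemma shift_ray:
  assumes r: "geodesic_ray c" and a: "0 \<le> a"
  shows "geodesic_ray (shift a c)" "(c, shift a c) \<in> asymptotic" "shift a c 0 = c a"
    "\<And>t. 0 \<le> t \<Longrightarrow> shift a c t = c (a + t)"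
proof -
  show sr: "geodesic_ray (shift a c)" unfolding geodesic_ray_def shift_def
    using ray_dist[OF r] a by auto
  have "\<forall>t\<ge>0. dist (c t) (shift a c t) \<le> a"
    using ray_dist[OF r] a unfolding shift_def by auto
  then show "(c, shift a c) \<in> asymptotic" unfolding asymptotic_def using r sr by auto
  show "shift a c 0 = c a" unfolding shift_def by simp
  show "\<And>t. 0 \<le> t \<Longrightarrow> shift a c t = c (a + t)" unfolding shift_def by simp
qed

lemma proper_convergent:
  fixes X :: "nat \<Rightarrow> 'a::metric_space"
  assumes pr: "proper_space TYPE('a)" and C: "Cauchy X"
  shows "convergent X"
proof -
  have "bounded (range X)" using cauchy_imp_bounded[OF C] .
  then obtain e a where sub: "range X \<subseteq> cball a e" using bounded_subset_cball by blast
  have "compact (cball a e)" using pr unfolding proper_space_def by blast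
  then have "complete (cball a e)" by (rule compact_imp_complete)
  then obtain l where "X \<longlonglongrightarrow> l" using sub C unfolding complete_def by blast
  then show ?thesis unfolding convergent_def by blast
qed

lemma abs_cross_bound:
  fixes n m Ln Lm d0 :: real
  assumes "0 \<le> n" "n \<le> m" "\<bar>Ln - n\<bar> \<le> d0" "\<bar>Lm - m\<bar> \<le> d0"
  shows "\<bar>n * Lm - m * Ln\<bar> \<le> 2 * m * d0"
proof -
  have e: "n * Lm - m * Ln = n * (Lm - m) - m * (Ln - n)" by (simp add: algebra_simps)
  have "\<bar>n * (Lm - m)\<bar> \<le> n * d0" using assms by (simp add: abs_mult mult_left_mono)
  moreover have "\<bar>m * (Ln - n)\<bar> \<le> m * d0" using assms by (simp add: abs_mult mult_left_mono)
  moreover have "n * d0 \<le> m * d0" using assms by (intro mult_right_mono) (auto simp: abs_le_iff)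
  moreover have "\<bar>n * (Lm - m) - m * (Ln - n)\<bar> \<le> \<bar>n * (Lm - m)\<bar> + \<bar>m * (Ln - n)\<bar>"
    by (rule abs_triangle_ineq4)
  ultimately show ?thesis unfolding e by linarith
qed

lemma ray_exists:
  fixes c :: "real \<Rightarrow> 'a::metric_space" and x :: 'a
  assumes cat: "CAT0 TYPE('a)" and pr: "proper_space TYPE('a)" and r: "geodesic_ray c"
  shows "\<exists>r'. geodesic_ray r' \<and> r' 0 = x \<and> (c, r') \<in> asymptotic"
proof -
  define d0 where "d0 = dist x (c 0)"
  have d0: "0 \<le> d0" unfolding d0_def by simp
  define \<sigma> where "\<sigma> n = (SOME s. geodesic_seg s x (c (real n)))" for n :: nat
  have g\<sigma>: "geodesic_seg (\<sigma> n) x (c (real n))" for n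
    unfolding \<sigma>_def by (rule someI_ex[where P="\<lambda>s. geodesic_seg s x (c (real n))"]) (rule cat0_geodesic_space[OF cat])
  define L where "L n = dist x (c (real n))" for n :: nat
  have cn: "dist (c 0) (c (real n)) = real n" for n using ray_dist[OF r, of 0 "real n"] by simp
  have Lb: "\<bar>L n - real n\<bar> \<le> d0" for n
  proof -
    have "L n \<le> d0 + real n" unfolding L_def d0_def using dist_triangle[of x "c (real n)" "c 0"] cn[of n] by simp
    moreover have "real n \<le> d0 + L n" unfolding L_def d0_def
      using dist_triangle[of "c 0" "c (real n)" x] cn[of n] by (simp add: dist_commute)
    ultimately show ?thesis by (simp add: abs_le_iff)
  qed
  have gc: "geodesic_seg c (c 0) (c (real n))" for n using ray_seg[OF r] by simp
  have \<sigma>0: "\<sigma> n 0 = x" for n using g\<sigma>[of n] unfolding geodesic_seg_def by blast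
  have clA: "dist (\<sigma> n t) (c (t * real n / L n)) \<le> d0" if t: "0 \<le> t" "t \<le> L n" "0 < L n" for n t
  proof -
    have l: "0 \<le> t / L n" "t / L n \<le> 1" using t by auto
    have "dist (\<sigma> n (t / L n * dist x (c (real n)))) (c (t / L n * dist (c 0) (c (real n))))
        \<le> (1 - t / L n) * dist x (c 0) + t / L n * dist (c (real n)) (c (real n))"
      using cat0_L2[OF cat g\<sigma>[of n] gc[of n] l] .
    then have "dist (\<sigma> n t) (c (t * real n / L n)) \<le> (1 - t / L n) * d0"
      unfolding cn using t unfolding L_def d0_def by simp
    also have "\<dots> \<le> d0" using l d0 by (simp add: mult_left_le_one_le)
    finally show ?thesis .
  qed
  have clB: "dist (\<sigma> n t) (\<sigma> m t) \<le> 3 * t * d0 / L n"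
    if nm: "n \<le> m" and t: "0 \<le> t" "t \<le> L n" "t \<le> L m" and n0: "0 < n" and Ln: "0 < L n" for n m t
  proof -
    have m0: "0 < real m" using nm n0 by simp
    define l0 where "l0 = real n / real m"
    have l0: "0 \<le> l0" "l0 \<le> 1" unfolding l0_def using nm m0 by auto
    define y where "y = \<sigma> m (l0 * L m)"
    have "dist (\<sigma> m (l0 * dist x (c (real m)))) (c (l0 * dist (c 0) (c (real m))))
        \<le> (1 - l0) * dist x (c 0) + l0 * dist (c (real m)) (c (real m))"
      using cat0_L2[OF cat g\<sigma>[of m] gc[of m] l0] .
    then have "dist y (c (real n)) \<le> (1 - l0) * d0"
      unfolding cn y_def L_def d0_def using m0 by (simp add: l0_def)
    also have "\<dots> \<le> d0" using l0 d0 by (simp add: mult_left_le_one_le)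
    finally have yc: "dist y (c (real n)) \<le> d0" .
    have Lm0: "0 \<le> L m" unfolding L_def by simp
    have l0L: "0 \<le> l0 * L m" "l0 * L m \<le> dist x (c (real m))"
      using l0 Lm0 unfolding L_def by (auto simp: mult_left_le_one_le)
    have gy: "geodesic_seg (\<sigma> m) x y" unfolding y_def using geodesic_seg_sub[OF g\<sigma>[of m] l0L] .
    have dxy: "dist x y = l0 * L m" unfolding y_def
      using geodesic_seg_dist[OF g\<sigma>[of m], of 0 "l0 * L m"] l0L \<sigma>0[of m] by simp
    define l where "l = t / L n"
    have l: "0 \<le> l" "l \<le> 1" unfolding l_def using t Ln by auto
    have "dist (\<sigma> n (l * dist x (c (real n)))) (\<sigma> m (l * dist x y)) \<le> l * dist (c (real n)) y"
      using cat0_L1[OF cat g\<sigma>[of n] gy l] .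
    then have i1: "dist (\<sigma> n t) (\<sigma> m (l * (l0 * L m))) \<le> l * d0"
      unfolding dxy using yc Ln l unfolding l_def L_def
      by (smt (verit, ccfv_SIG) dist_commute mult_left_mono nonzero_eq_divide_eq)
    have pos1: "0 \<le> l * (l0 * L m)" using l l0 Lm0 by simp
    have pos2: "l * (l0 * L m) \<le> dist x (c (real m))" using l l0L
      by (metis L_def mult_left_le_one_le order.trans pos1 l0L(1) mult_nonneg_nonneg) 
    have i2: "dist (\<sigma> m (l * (l0 * L m))) (\<sigma> m t) = \<bar>l * (l0 * L m) - t\<bar>"
      using geodesic_seg_dist[OF g\<sigma>[of m] pos1 pos2, of t] t unfolding L_def by simp
    have eq: "l * (l0 * L m) - t = t * (real n * L m - real m * L n) / (real m * L n)"
      unfolding l_def l0_def using Ln m0 by (simp add: field_simps)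
    have cross: "\<bar>real n * L m - real m * L n\<bar> \<le> 2 * real m * d0"
      using abs_cross_bound[of "real n" "real m" "L n" d0 "L m"] Lb nm by simp
    have "\<bar>l * (l0 * L m) - t\<bar> = t * \<bar>real n * L m - real m * L n\<bar> / (real m * L n)"
      unfolding eq using t Ln m0 by (simp add: abs_mult abs_divide)
    also have "\<dots> \<le> t * (2 * real m * d0) / (real m * L n)"
      using cross t Ln m0 by (intro divide_right_mono mult_left_mono) auto
    also have "\<dots> = 2 * t * d0 / L n" using m0 by (simp add: field_simps)
    finally have i2': "dist (\<sigma> m (l * (l0 * L m))) (\<sigma> m t) \<le> 2 * t * d0 / L n" using i2 by simp
    have "dist (\<sigma> n t) (\<sigma> m t) \<le> l * d0 + 2 * t * d0 / L n"
      using i1 i2' dist_triangle[of "\<sigma> n t" "\<sigma> m t" "\<sigma> m (l * (l0 * L m))"] by linarith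
    also have "\<dots> = 3 * t * d0 / L n" unfolding l_def by (simp add: field_simps)
    finally show ?thesis .
  qed
  have big: "\<exists>N::nat. \<forall>n\<ge>N. 0 < n \<and> B \<le> L n" for B :: real
  proof -
    obtain N :: nat where N: "max B 0 + d0 + 1 \<le> real N" using real_arch_simple by blast
    show ?thesis
    proof (intro exI allI impI conjI)
      fix n assume "N \<le> n"
      then have h: "max B 0 + d0 + 1 \<le> real n" using N by linarith
      have "B \<le> max B 0" by simp
      moreover have "real n - L n \<le> d0" using Lb[of n] by (simp add: abs_le_iff)
      ultimately show "B \<le> L n" using h by linarith
      show "0 < n" using h d0 by simp
    qed
  qed
  have cauchy: "Cauchy (\<lambda>n. \<sigma> n t)" if t: "0 \<le> t" for t
  proof (rule metric_CauchyI)
    fix e :: real assume e: "0 < e"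
    obtain N where N: "\<And>n. n \<ge> N \<Longrightarrow> 0 < n \<and> t + 1 + 3 * t * d0 / e \<le> L n" using big by blast
    have key: "dist (\<sigma> n t) (\<sigma> m t) < e" if "N \<le> n" "n \<le> m" for n m
    proof -
      have a: "0 < n" "t + 1 + 3 * t * d0 / e \<le> L n" using N that by auto
      have b: "t + 1 + 3 * t * d0 / e \<le> L m" using N that by auto
      have td: "0 \<le> 3 * t * d0 / e" using t d0 e by simp
      have Ln: "0 < L n" "t \<le> L n" "t \<le> L m" using a b td t by linarith+
      have "dist (\<sigma> n t) (\<sigma> m t) \<le> 3 * t * d0 / L n" using clB[OF that(2) t Ln(2) Ln(3) a(1) Ln(1)] .
      also have "\<dots> < e"
      proof -
        have "3 * t * d0 / e < L n" using a td t by linarith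
        then have "3 * t * d0 < e * L n" using e by (simp add: divide_less_eq mult.commute)
        then show ?thesis using Ln by (simp add: divide_less_eq mult.commute)
      qed
      finally show ?thesis .
    qed
    show "\<exists>M. \<forall>m\<ge>M. \<forall>n\<ge>M. dist (\<sigma> m t) (\<sigma> n t) < e"
    proof (intro exI allI impI)
      fix m n assume "N \<le> m" "N \<le> n"
      then show "dist (\<sigma> m t) (\<sigma> n t) < e"
        using key[of m n] key[of n m] by (cases "m \<le> n") (auto simp: dist_commute)
    qed
  qed
  define r' where "r' t = lim (\<lambda>n. \<sigma> n (max 0 t))" for t
  have lim: "(\<lambda>n. \<sigma> n t) \<longlonglongrightarrow> r' t" if "0 \<le> t" for t
    using proper_convergent[OF pr cauchy[OF that]] that unfolding r'_def convergent_LIMSEQ_iff by simp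
  have r'0: "r' 0 = x"
    using lim[of 0] \<sigma>0 by (simp add: LIMSEQ_const_iff)
  have ray': "geodesic_ray r'"
    unfolding geodesic_ray_def
  proof (intro conjI allI impI)
    fix s t :: real assume st: "0 \<le> s" "0 \<le> t"
    have T: "(\<lambda>n. dist (\<sigma> n s) (\<sigma> n t)) \<longlonglongrightarrow> dist (r' s) (r' t)"
      using tendsto_dist[OF lim[OF st(1)] lim[OF st(2)]] .
    obtain N where N: "\<And>n. n \<ge> N \<Longrightarrow> 0 < n \<and> s + t \<le> L n" using big by blast
    have "eventually (\<lambda>n. dist (\<sigma> n s) (\<sigma> n t) = \<bar>s - t\<bar>) sequentially"
      unfolding eventually_sequentially
    proof (intro exI allI impI)
      fix n assume "N \<le> n"
      then have "s + t \<le> L n" using N by auto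
      then show "dist (\<sigma> n s) (\<sigma> n t) = \<bar>s - t\<bar>"
        using geodesic_seg_dist[OF g\<sigma>[of n], of s t] st unfolding L_def by simp
    qed
    then have "(\<lambda>n. dist (\<sigma> n s) (\<sigma> n t)) \<longlonglongrightarrow> \<bar>s - t\<bar>"
      by (rule tendsto_eventually)
    then show "dist (r' s) (r' t) = \<bar>s - t\<bar>" using T LIMSEQ_unique by blast
  next
    fix t :: real assume "t < 0"
    then show "r' t = r' 0" unfolding r'_def by simp
  qed
  have asym: "dist (c t) (r' t) \<le> 2 * d0" if t: "0 \<le> t" for t
  proof -
    have T: "(\<lambda>n. dist (\<sigma> n t) (c t)) \<longlonglongrightarrow> dist (r' t) (c t)"
      using tendsto_dist[OF lim[OF t] tendsto_const] .
    obtain N where N: "\<And>n. n \<ge> N \<Longrightarrow> 0 < n \<and> t + 1 \<le> L n" using big by blast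
    have "\<forall>n\<ge>N. dist (\<sigma> n t) (c t) \<le> 2 * d0"
    proof (intro allI impI)
      fix n assume "N \<le> n"
      then have n: "0 < n" "t + 1 \<le> L n" using N by auto
      have Ln: "0 < L n" "t \<le> L n" using n t by linarith+
      have A: "dist (\<sigma> n t) (c (t * real n / L n)) \<le> d0" using clA[OF t Ln(2) Ln(1)] .
      have pos: "0 \<le> t * real n / L n" using t Ln by simp
      have B: "dist (c (t * real n / L n)) (c t) = \<bar>t * real n / L n - t\<bar>"
        using ray_dist[OF r pos t] .
      have "t * real n / L n - t = t * (real n - L n) / L n" using Ln by (simp add: field_simps)
      then have "\<bar>t * real n / L n - t\<bar> = t * \<bar>real n - L n\<bar> / L n"
        using t Ln by (simp add: abs_mult abs_divide)
      also have "\<dots> \<le> t * d0 / L n"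
        using Lb[of n] t Ln by (intro divide_right_mono mult_left_mono) (auto simp: abs_minus_commute)
      also have "\<dots> \<le> d0"
      proof -
        have "t * d0 \<le> L n * d0" using Ln d0 by (intro mult_right_mono) auto
        then show ?thesis using Ln by (simp add: divide_le_eq mult.commute)
      qed
      finally have "dist (c (t * real n / L n)) (c t) \<le> d0" using B by simp
      then show "dist (\<sigma> n t) (c t) \<le> 2 * d0"
        using A dist_triangle[of "\<sigma> n t" "c t" "c (t * real n / L n)"] by linarith
    qed
    then have "dist (r' t) (c t) \<le> 2 * d0" using LIMSEQ_le_const2[OF T] by blast
    then show ?thesis by (simp add: dist_commute)
  qed
  have "(c, r') \<in> asymptotic" unfolding asymptotic_def using r ray' asym by blast
  then show ?thesis using ray' r'0 by blast
qed

lemma boundary_elem: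
  fixes \<alpha> :: "(real \<Rightarrow> 'a::metric_space) set"
  assumes "\<alpha> \<in> visual_boundary TYPE('a)"
  obtains c :: "real \<Rightarrow> 'a" where "geodesic_ray c" "\<alpha> = asymptotic `` {c}"
  using assms unfolding visual_boundary_def by (auto elim!: quotientE)

lemma boundary_mem:
  fixes \<alpha> :: "(real \<Rightarrow> 'a::metric_space) set"
  assumes "\<alpha> \<in> visual_boundary TYPE('a)" "c \<in> \<alpha>"
  shows "geodesic_ray (c :: real \<Rightarrow> 'a)"
  using assms by (auto elim!: boundary_elem simp: asymptotic_def)

lemma boundary_asym:
  fixes \<alpha> :: "(real \<Rightarrow> 'a::metric_space) set"
  assumes "\<alpha> \<in> visual_boundary TYPE('a)" "c \<in> \<alpha>" "c' \<in> \<alpha>"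
  shows "((c :: real \<Rightarrow> 'a), c') \<in> asymptotic"
proof -
  obtain a :: "real \<Rightarrow> 'a" where a: "geodesic_ray a" "\<alpha> = asymptotic `` {a}" using assms(1) by (rule boundary_elem)
  have "(a, c) \<in> asymptotic" "(a, c') \<in> asymptotic" using assms a by auto
  then show ?thesis using equiv_asym[where 'a='a] unfolding equiv_def by (meson symE transE)
qed

lemma boundary_closed:
  fixes \<alpha> :: "(real \<Rightarrow> 'a::metric_space) set"
  assumes "\<alpha> \<in> visual_boundary TYPE('a)" "c \<in> \<alpha>" "((c :: real \<Rightarrow> 'a), c') \<in> asymptotic"
  shows "c' \<in> \<alpha>"
proof -
  obtain a :: "real \<Rightarrow> 'a" where a: "geodesic_ray a" "\<alpha> = asymptotic `` {a}" using assms(1) by (rule boundary_elem)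
  have "(a, c) \<in> asymptotic" using assms a by auto
  then have "(a, c') \<in> asymptotic" using assms(3) equiv_asym[where 'a='a] unfolding equiv_def by (meson transE)
  then show ?thesis using a by auto
qed

lemma boundary_eq:
  fixes \<alpha> :: "(real \<Rightarrow> 'a::metric_space) set"
  assumes "\<alpha> \<in> visual_boundary TYPE('a)" "\<beta> \<in> visual_boundary TYPE('a)"
    "(c :: real \<Rightarrow> 'a) \<in> \<alpha>" "c \<in> \<beta>"
  shows "\<alpha> = \<beta>"
  using quotient_disj[OF equiv_asym[where 'a='a]] assms unfolding visual_boundary_def by blast

lemma ray_to_eq:
  fixes x :: "'a::metric_space"
  assumes cat: "CAT0 TYPE('a)" and a: "\<alpha> \<in> visual_boundary TYPE('a)" and c: "c \<in> \<alpha>" "c 0 = x"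
  shows "ray_to x \<alpha> = c"
  unfolding ray_to_def
proof (rule the_equality)
  show "c \<in> \<alpha> \<and> c 0 = x" using c by simp
  fix c' assume "c' \<in> \<alpha> \<and> c' 0 = x"
  then show "c' = c" using asym_unique[OF cat boundary_asym[OF a, of c' c]] c by auto
qed

lemma ray_to_props:
  fixes x :: "'a::metric_space"
  assumes cat: "CAT0 TYPE('a)" and pr: "proper_space TYPE('a)" and a: "\<alpha> \<in> visual_boundary TYPE('a)"
  shows "ray_to x \<alpha> \<in> \<alpha>" "geodesic_ray (ray_to x \<alpha>)" "ray_to x \<alpha> 0 = x"
proof -
  obtain c :: "real \<Rightarrow> 'a" where c: "geodesic_ray c" "\<alpha> = asymptotic `` {c}" using a by (rule boundary_elem)
  obtain r where r: "geodesic_ray r" "r 0 = x" "(c, r) \<in> asymptotic" using ray_exists[OF cat pr c(1)] by blast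
  have ra: "r \<in> \<alpha>" using r c by auto
  have e: "ray_to x \<alpha> = r" using ray_to_eq[OF cat a ra r(2)] .
  show "ray_to x \<alpha> \<in> \<alpha>" "geodesic_ray (ray_to x \<alpha>)" "ray_to x \<alpha> 0 = x" unfolding e using ra r by auto
qed

lemma ray_to_move:
  fixes p q :: "'a::metric_space"
  assumes cat: "CAT0 TYPE('a)" and pr: "proper_space TYPE('a)" and a: "\<alpha> \<in> visual_boundary TYPE('a)"
    and t: "0 \<le> t"
  shows "dist (ray_to p \<alpha> t) (ray_to q \<alpha> t) \<le> dist p q"
  using asym_nonincr[OF cat boundary_asym[OF a ray_to_props(1)[OF cat pr a] ray_to_props(1)[OF cat pr a]] t]
    ray_to_props(3)[OF cat pr a] by simp

definition del :: "'a::metric_space \<Rightarrow> (real \<Rightarrow> 'a) set \<Rightarrow> (real \<Rightarrow> 'a) set \<Rightarrow> real \<Rightarrow> real" where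
  "del p \<alpha> \<beta> t = dist (ray_to p \<alpha> t) (ray_to p \<beta> t)"

lemma del_move:
  fixes p q :: "'a::metric_space"
  assumes cat: "CAT0 TYPE('a)" and pr: "proper_space TYPE('a)" and a: "\<alpha> \<in> visual_boundary TYPE('a)"
    and b: "\<beta> \<in> visual_boundary TYPE('a)" and t: "0 \<le> t"
  shows "del p \<alpha> \<beta> t \<le> del q \<alpha> \<beta> t + 2 * dist p q"
  using ray_to_move[OF cat pr a t, of p q] ray_to_move[OF cat pr b t, of p q]
    dist_triangle[of "ray_to p \<alpha> t" "ray_to p \<beta> t" "ray_to q \<alpha> t"]
    dist_triangle[of "ray_to q \<alpha> t" "ray_to p \<beta> t" "ray_to q \<beta> t"]
  unfolding del_def by (simp add: dist_commute)

lemma del_L1: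
  fixes p :: "'a::metric_space"
  assumes cat: "CAT0 TYPE('a)" and pr: "proper_space TYPE('a)" and a: "\<alpha> \<in> visual_boundary TYPE('a)"
    and b: "\<beta> \<in> visual_boundary TYPE('a)" and t: "0 \<le> t" "t \<le> T" "0 < T"
  shows "del p \<alpha> \<beta> t \<le> (t / T) * del p \<alpha> \<beta> T"
  unfolding del_def
  using ray_L1[OF cat ray_to_props(2)[OF cat pr a] ray_to_props(2)[OF cat pr b] _ t]
    ray_to_props(3)[OF cat pr a] ray_to_props(3)[OF cat pr b] by simp

lemma act_inv1:
  assumes "group G" "isometric_action G act" "g \<in> carrier G"
  shows "act (inv\<^bsub>G\<^esub> g) (act g x) = x"
proof -
  have ga: "group_action G UNIV act" using assms(2) unfolding isometric_action_def by (rule conjunct1)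
  show ?thesis by (rule group_action.orbit_sym_aux[OF ga assms(3) UNIV_I refl])
qed

lemma act_inv2:
  assumes "group G" "isometric_action G act" "g \<in> carrier G"
  shows "act g (act (inv\<^bsub>G\<^esub> g) x) = x"
proof -
  have "inv\<^bsub>G\<^esub> g \<in> carrier G" by (rule group.inv_closed[OF assms(1,3)])
  then have "act (inv\<^bsub>G\<^esub> (inv\<^bsub>G\<^esub> g)) (act (inv\<^bsub>G\<^esub> g) x) = x" by (rule act_inv1[OF assms(1,2)])
  then show ?thesis using group.inv_inv[OF assms(1,3)] by simp
qed

lemma act_dist:
  assumes "isometric_action G act" "g \<in> carrier G"
  shows "dist (act g x) (act g y) = dist x y"
  using assms(1)[unfolded isometric_action_def, THEN conjunct2] assms(2) by blast

lemma ray_to_act: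
  fixes x0 :: "'a::metric_space"
  assumes cat: "CAT0 TYPE('a)" and pr: "proper_space TYPE('a)" and a: "\<alpha> \<in> visual_boundary TYPE('a)"
    and G: "group G" "isometric_action G act" "g \<in> carrier G"
  shows "ray_to x0 (boundary_act act g \<alpha>) = act g \<circ> ray_to (act (inv\<^bsub>G\<^esub> g) x0) \<alpha>"
  unfolding ray_to_def[of x0 "boundary_act act g \<alpha>"]
proof (rule the_equality)
  let ?r = "ray_to (act (inv\<^bsub>G\<^esub> g) x0) \<alpha>"
  show "act g \<circ> ?r \<in> boundary_act act g \<alpha> \<and> (act g \<circ> ?r) 0 = x0"
    unfolding boundary_act_def using ray_to_props[OF cat pr a] act_inv2[OF G] by auto
  fix c assume c: "c \<in> boundary_act act g \<alpha> \<and> c 0 = x0"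
  then obtain r' where r': "r' \<in> \<alpha>" "c = act g \<circ> r'" unfolding boundary_act_def by auto
  have "act g (r' 0) = x0" using c r' by simp
  then have "r' 0 = act (inv\<^bsub>G\<^esub> g) x0" using act_inv1[OF G] by metis
  then have "?r = r'" using ray_to_eq[OF cat a r'(1)] by simp
  then show "c = act g \<circ> ?r" using r' by simp
qed

definition Fs :: "'a::metric_space \<Rightarrow> (real \<Rightarrow> 'a) set \<Rightarrow> (real \<Rightarrow> 'a) set \<Rightarrow> real" where
  "Fs p \<alpha> \<beta> = (\<Sum>i. min (del p \<alpha> \<beta> (real (Suc i))) ((1/2) ^ Suc i))"

lemma bdist_eq:
  fixes x0 :: "'a::metric_space"
  assumes cat: "CAT0 TYPE('a)" and pr: "proper_space TYPE('a)" and a: "\<alpha> \<in> visual_boundary TYPE('a)"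
    and b: "\<beta> \<in> visual_boundary TYPE('a)"
    and G: "group G" "isometric_action G act" "g \<in> carrier G"
  shows "boundary_dist x0 (boundary_act act g \<alpha>) (boundary_act act g \<beta>) = Fs (act (inv\<^bsub>G\<^esub> g) x0) \<alpha> \<beta>"
  unfolding boundary_dist_def Fs_def del_def ray_to_act[OF cat pr a G] ray_to_act[OF cat pr b G]
  using act_dist[OF G(2,3)] by simp

lemma Fs_summable: "summable (\<lambda>i. min (del p \<alpha> \<beta> (real (Suc i))) ((1/2::real) ^ Suc i))"
proof (rule summable_comparison_test')
  show "summable (\<lambda>i. (1/2::real) ^ Suc i)" by simp
  fix n :: nat
  show "norm (min (del p \<alpha> \<beta> (real (Suc n))) ((1/2) ^ Suc n)) \<le> (1/2) ^ Suc n"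
    unfolding del_def by simp
qed

lemma Fs_nonneg: "0 \<le> Fs p \<alpha> \<beta>"
  unfolding Fs_def by (rule suminf_nonneg[OF Fs_summable]) (simp add: del_def)

lemma Fs_term: "min (del p \<alpha> \<beta> (real (Suc i))) ((1/2) ^ Suc i) \<le> Fs p \<alpha> \<beta>"
proof -
  have "(\<Sum>j\<in>{i}. min (del p \<alpha> \<beta> (real (Suc j))) ((1/2::real) ^ Suc j)) \<le> Fs p \<alpha> \<beta>"
    unfolding Fs_def by (rule sum_le_suminf[OF Fs_summable]) (auto simp: del_def)
  then show ?thesis by simp
qed

lemma Fs_bound: "Fs p \<alpha> \<beta> \<le> (\<Sum>i<N. del p \<alpha> \<beta> (real (Suc i))) + (1/2) ^ N"
proof -
  let ?f = "\<lambda>i. min (del p \<alpha> \<beta> (real (Suc i))) ((1/2::real) ^ Suc i)"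
  have "Fs p \<alpha> \<beta> = (\<Sum>n. ?f (n + N)) + (\<Sum>i<N. ?f i)"
    unfolding Fs_def by (rule suminf_split_initial_segment[OF Fs_summable])
  also have "(\<Sum>i<N. ?f i) \<le> (\<Sum>i<N. del p \<alpha> \<beta> (real (Suc i)))"
    by (intro sum_mono) simp
  also have "(\<Sum>n. ?f (n + N)) \<le> (\<Sum>n. (1/2::real) ^ N * ((1/2) * (1/2) ^ n))"
  proof (rule suminf_le)
    show "summable (\<lambda>n. ?f (n + N))" by (rule summable_ignore_initial_segment[OF Fs_summable])
    show "summable (\<lambda>n. (1/2::real) ^ N * ((1/2) * (1/2) ^ n))"
      by (intro summable_mult summable_geometric) simp
    fix n show "?f (n + N) \<le> (1/2::real) ^ N * ((1/2) * (1/2) ^ n)"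
      by (simp add: power_add power_Suc mult_ac)
  qed
  also have "(\<Sum>n. (1/2::real) ^ N * ((1/2) * (1/2) ^ n)) = (1/2) ^ N"
  proof -
    have s1: "summable (\<lambda>n. (1/2::real) ^ n)" by simp
    have s2: "summable (\<lambda>n. (1/2::real) * (1/2) ^ n)" by (rule summable_mult[OF s1])
    have "(\<Sum>n. (1/2::real) ^ N * ((1/2) * (1/2) ^ n)) = (1/2) ^ N * (\<Sum>n. (1/2) * (1/2::real) ^ n)"
      by (rule suminf_mult[OF s2])
    also have "(\<Sum>n. (1/2) * (1/2::real) ^ n) = (1/2) * (\<Sum>n. (1/2::real) ^ n)"
      by (rule suminf_mult[OF s1])
    finally have "(\<Sum>n. (1/2::real) ^ N * ((1/2) * (1/2) ^ n)) = (1/2) ^ N * ((1/2) * (\<Sum>n. (1/2::real) ^ n))" .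
    also have "(\<Sum>n. (1/2::real) ^ n) = 2" using suminf_geometric[of "1/2::real"] by simp
    finally show ?thesis by simp
  qed
  finally show ?thesis by simp
qed

lemma chain:
  fixes x0 :: "'a::metric_space"
  assumes cat: "CAT0 TYPE('a)" and pr: "proper_space TYPE('a)" and a: "\<alpha> \<in> visual_boundary TYPE('a)"
    and b: "\<beta> \<in> visual_boundary TYPE('a)" and K: "0 < K" and E: "0 \<le> E"
    and far: "\<And>p t. R < dist x0 p \<Longrightarrow> 0 \<le> t \<Longrightarrow> t \<le> K \<Longrightarrow> del p \<alpha> \<beta> t \<le> E"
    and t: "0 \<le> t"
  shows "del x0 \<alpha> \<beta> t \<le> t * E / K"
proof -
  define R' where "R' = max R 0 + 1"
  have R': "R < R'" "0 < R'" unfolding R'_def by auto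
  define c where "c = ray_to x0 \<alpha>"
  have c: "c \<in> \<alpha>" "geodesic_ray c" "c 0 = x0" unfolding c_def using ray_to_props[OF cat pr a] by auto
  define pj where "pj j = c (R' + real j * K)" for j :: nat
  have pjpos: "0 \<le> R' + real j * K" for j using R' K by simp
  have dpj: "dist x0 (pj j) = R' + real j * K" for j
    unfolding pj_def using ray_dist[OF c(2), of 0 "R' + real j * K"] pjpos[of j] c(3) by simp
  have pjfar: "R < dist x0 (pj j)" for j unfolding dpj using R' K by (smt (verit) of_nat_0_le_iff mult_nonneg_nonneg)
  have ra: "ray_to (pj j) \<alpha> = shift (R' + real j * K) c" for j
  proof -
    note sh = shift_ray[OF c(2) pjpos[of j]]
    have "shift (R' + real j * K) c \<in> \<alpha>" using boundary_closed[OF a c(1) sh(2)] .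
    then show ?thesis using ray_to_eq[OF cat a] sh(3) unfolding pj_def by blast
  qed
  define bb where "bb = ray_to (pj 0) \<beta>"
  have bb: "bb \<in> \<beta>" "geodesic_ray bb" "bb 0 = pj 0" unfolding bb_def using ray_to_props[OF cat pr b] by auto
  have claim: "dist (bb (real j * K)) (pj j) \<le> real j * E" for j
  proof (induction j)
    case 0 then show ?case using bb(3) by simp
  next
    case (Suc j)
    have jK: "0 \<le> real j * K" using K by simp
    note sh = shift_ray[OF bb(2) jK]
    have b'\<beta>: "shift (real j * K) bb \<in> \<beta>" using boundary_closed[OF b bb(1) sh(2)] .
    define q where "q = ray_to (pj j) \<beta>"
    have q: "q \<in> \<beta>" "q 0 = pj j" unfolding q_def using ray_to_props[OF cat pr b] by auto
    have "dist (shift (real j * K) bb K) (q K) \<le> dist (shift (real j * K) bb 0) (q 0)"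
      using asym_nonincr[OF cat boundary_asym[OF b b'\<beta> q(1)]] K by simp
    then have i1: "dist (bb (real j * K + K)) (q K) \<le> real j * E"
      using sh(3) sh(4)[of K] K q(2) Suc.IH by simp
    have "del (pj j) \<alpha> \<beta> K \<le> E" using far[OF pjfar[of j]] K by simp
    then have i2: "dist (pj (Suc j)) (q K) \<le> E"
      unfolding del_def ra q_def[symmetric] using shift_ray(4)[OF c(2) pjpos[of j], of K] K
      unfolding pj_def by (simp add: algebra_simps)
    have e: "real (Suc j) * K = real j * K + K" by (simp add: algebra_simps)
    show ?case unfolding e using i1 i2 dist_triangle[of "bb (real j * K + K)" "pj (Suc j)" "q K"]
      by (simp add: dist_commute algebra_simps)
  qed
  have d0: "del (pj 0) \<alpha> \<beta> (real j * K) \<le> real j * E" for j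
  proof -
    have "ray_to (pj 0) \<alpha> (real j * K) = pj j"
      unfolding ra using shift_ray(4)[OF c(2) pjpos[of 0], of "real j * K"] K unfolding pj_def by simp
    then show ?thesis unfolding del_def bb_def[symmetric] using claim[of j] by (simp add: dist_commute)
  qed
  have dx: "del x0 \<alpha> \<beta> (real j * K) \<le> real j * E + 2 * R'" for j
    using del_move[OF cat pr a b, of "real j * K" x0 "pj 0"] d0[of j] dpj[of 0] K by simp
  show ?thesis
  proof (cases "t = 0")
    case True then show ?thesis unfolding del_def using ray_to_props(3)[OF cat pr a] ray_to_props(3)[OF cat pr b] by simp
  next
    case False
    then have tp: "0 < t" using t by simp
    show ?thesis
    proof (rule field_le_epsilon)
      fix e :: real assume e: "0 < e"
      obtain j :: nat where j: "t / K + 2 * t * R' / (K * e) + 1 \<le> real j" using real_arch_simple by blast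
      have q1: "0 \<le> t / K" "0 \<le> 2 * t * R' / (K * e)" using tp K R' e by auto
      have jpos: "0 < real j" using j q1 by linarith
      have jK: "t \<le> real j * K"
      proof -
        have "t / K \<le> real j" using j q1 by linarith
        then show ?thesis using K by (simp add: divide_le_eq mult.commute)
      qed
      have jKp: "0 < real j * K" using jpos K by simp
      have "del x0 \<alpha> \<beta> t \<le> (t / (real j * K)) * del x0 \<alpha> \<beta> (real j * K)"
        using del_L1[OF cat pr a b t jK jKp] .
      also have "\<dots> \<le> (t / (real j * K)) * (real j * E + 2 * R')"
        using dx[of j] tp jKp by (intro mult_left_mono) auto
      also have "\<dots> = t * E / K + 2 * t * R' / (real j * K)"
        using jpos K by (simp add: field_simps)
      also have "2 * t * R' / (real j * K) \<le> e"
      proof -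
        have "2 * t * R' / (K * e) \<le> real j" using j q1 by linarith
        then have "2 * t * R' \<le> real j * (K * e)" using K e by (simp add: divide_le_eq mult.commute)
        then show ?thesis using jKp by (simp add: divide_le_eq mult.commute mult.left_commute)
      qed
      finally show "del x0 \<alpha> \<beta> t \<le> t * E / K + e" by simp
    qed
  qed
qed

lemma near_bound:
  fixes p y0 :: "'a::metric_space"
  assumes cat: "CAT0 TYPE('a)" and pr: "proper_space TYPE('a)" and a: "\<alpha> \<in> visual_boundary TYPE('a)"
    and b: "\<beta> \<in> visual_boundary TYPE('a)"
    and t: "0 \<le> t" "dist y0 (ray_to p \<alpha> t) \<le> M" and u: "0 \<le> u" "dist y0 (ray_to p \<beta> u) \<le> M"
  shows "dist y0 p - M \<le> t" "del p \<alpha> \<beta> t \<le> 4 * M"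
proof -
  have dt: "dist p (ray_to p \<alpha> t) = t"
    using ray_dist[OF ray_to_props(2)[OF cat pr a], of 0 t] ray_to_props(3)[OF cat pr a] t by simp
  have du: "dist p (ray_to p \<beta> u) = u"
    using ray_dist[OF ray_to_props(2)[OF cat pr b], of 0 u] ray_to_props(3)[OF cat pr b] u by simp
  show "dist y0 p - M \<le> t" using dist_triangle[of y0 p "ray_to p \<alpha> t"] dt t(2) by (simp add: dist_commute)
  have tu: "\<bar>t - u\<bar> \<le> 2 * M"
  proof -
    have "t \<le> dist y0 p + M" using dist_triangle[of p "ray_to p \<alpha> t" y0] dt t(2) by (simp add: dist_commute)
    moreover have "dist y0 p - M \<le> u" using dist_triangle[of y0 p "ray_to p \<beta> u"] du u(2) by (simp add: dist_commute)
    moreover have "u \<le> dist y0 p + M" using dist_triangle[of p "ray_to p \<beta> u" y0] du u(2) by (simp add: dist_commute)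
    moreover have "dist y0 p - M \<le> t" using dist_triangle[of y0 p "ray_to p \<alpha> t"] dt t(2) by (simp add: dist_commute)
    ultimately show ?thesis by (simp add: abs_le_iff)
  qed
  have "dist (ray_to p \<beta> u) (ray_to p \<beta> t) = \<bar>u - t\<bar>" using ray_dist[OF ray_to_props(2)[OF cat pr b] u(1) t(1)] .
  moreover have "dist (ray_to p \<alpha> t) (ray_to p \<beta> u) \<le> 2 * M"
    using dist_triangle[of "ray_to p \<alpha> t" "ray_to p \<beta> u" y0] t(2) u(2) by (simp add: dist_commute)
  ultimately show "del p \<alpha> \<beta> t \<le> 4 * M"
    unfolding del_def using dist_triangle[of "ray_to p \<alpha> t" "ray_to p \<beta> t" "ray_to p \<beta> u"] tu
    by (simp add: abs_minus_commute)
qed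

lemma liminf_seq:
  fixes p :: "nat \<Rightarrow> 'a::metric_space" and y0 :: 'a
  assumes cat: "CAT0 TYPE('a)" and pr: "proper_space TYPE('a)" and a: "\<alpha> \<in> visual_boundary TYPE('a)"
    and b: "\<beta> \<in> visual_boundary TYPE('a)" and M: "0 < M"
    and lim: "filterlim (\<lambda>i. dist y0 (p i)) at_top sequentially"
    and near: "\<And>i. (\<exists>t\<ge>0. ray_to (p i) \<alpha> t \<in> cball y0 M) \<and> (\<exists>t\<ge>0. ray_to (p i) \<beta> t \<in> cball y0 M)"
  shows "(\<lambda>i. Fs (p i) \<alpha> \<beta>) \<longlonglongrightarrow> 0"
  unfolding LIMSEQ_iff
proof (intro allI impI)
  fix e :: real assume e: "0 < e"
  obtain N :: nat where N: "(1/2::real) ^ N < e / 2" using real_arch_pow_inv[of "e/2" "1/2"] e by auto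
  define W where "W = M + real N + 8 * M * (real N)^2 / e + 1"
  obtain i0 where i0: "\<And>i. i \<ge> i0 \<Longrightarrow> W \<le> dist y0 (p i)"
    using lim unfolding filterlim_at_top eventually_sequentially by blast
  show "\<exists>no. \<forall>n\<ge>no. norm (Fs (p n) \<alpha> \<beta> - 0) < e"
  proof (intro exI allI impI)
    fix i assume "i0 \<le> i"
    then have W: "W \<le> dist y0 (p i)" using i0 by blast
    obtain t u where t: "0 \<le> t" "dist y0 (ray_to (p i) \<alpha> t) \<le> M" and u: "0 \<le> u" "dist y0 (ray_to (p i) \<beta> u) \<le> M"
      using near[of i] by (auto simp: mem_cball)
    note nb = near_bound[OF cat pr a b t u]
    have q: "0 \<le> 8 * M * (real N)^2 / e" using M e by simp
    have tb: "real N + 8 * M * (real N)^2 / e + 1 \<le> t" using nb(1) W unfolding W_def by linarith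
    have tpos: "0 < t" using tb q by linarith
    have tN: "real N \<le> t" using tb q by linarith
    have trm: "del (p i) \<alpha> \<beta> (real (Suc k)) \<le> real N * (4 * M) / t" if k: "k < N" for k
    proof -
      have sk: "0 \<le> real (Suc k)" "real (Suc k) \<le> t" using k tN by auto
      have "del (p i) \<alpha> \<beta> (real (Suc k)) \<le> (real (Suc k) / t) * del (p i) \<alpha> \<beta> t"
        using del_L1[OF cat pr a b sk tpos] .
      also have "\<dots> \<le> (real (Suc k) / t) * (4 * M)" using nb(2) tpos by (intro mult_left_mono) auto
      also have "\<dots> \<le> (real N / t) * (4 * M)" using k tpos M
        by (intro mult_right_mono divide_right_mono) auto
      finally show ?thesis by simp
    qed
    have "(\<Sum>k<N. del (p i) \<alpha> \<beta> (real (Suc k))) \<le> (\<Sum>k<N. real N * (4 * M) / t)"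
      using trm by (intro sum_mono) auto
    also have "\<dots> = real N * (real N * (4 * M) / t)" by simp
    also have "\<dots> \<le> e / 2"
    proof -
      have "8 * M * (real N)^2 / e \<le> t" using tb by linarith
      then have "8 * M * (real N)^2 \<le> t * e" using e by (simp add: divide_le_eq)
      then have "real N * (real N * (4 * M)) \<le> e / 2 * t" by (simp add: power2_eq_square algebra_simps)
      then show ?thesis using tpos by (simp add: divide_le_eq)
    qed
    finally have "(\<Sum>k<N. del (p i) \<alpha> \<beta> (real (Suc k))) \<le> e / 2" .
    then have "Fs (p i) \<alpha> \<beta> < e" using Fs_bound[of "p i" \<alpha> \<beta> N] N by linarith
    then show "norm (Fs (p i) \<alpha> \<beta> - 0) < e" using Fs_nonneg[of "p i" \<alpha> \<beta>] by simp
  qed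
qed

lemma bdist_nonneg: "0 \<le> boundary_dist x0 \<alpha> \<beta>"
proof -
  have sm: "summable (\<lambda>i. min (dist (ray_to x0 \<alpha> (real (Suc i))) (ray_to x0 \<beta> (real (Suc i)))) ((1/2::real) ^ Suc i))"
  proof (rule summable_comparison_test')
    show "summable (\<lambda>i. (1/2::real) ^ Suc i)" by simp
    fix n :: nat
    show "norm (min (dist (ray_to x0 \<alpha> (real (Suc n))) (ray_to x0 \<beta> (real (Suc n)))) ((1/2) ^ Suc n)) \<le> (1/2) ^ Suc n"
      by simp
  qed
  show ?thesis unfolding boundary_dist_def by (rule suminf_nonneg[OF sm]) simp
qed

theorem theorem3p2:
  fixes G :: "('g, 'b) monoid_scheme"
    and act :: "'g \<Rightarrow> 'a::metric_space \<Rightarrow> 'a"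
    and x0 :: 'a
  assumes "group G"
    and "CAT0 TYPE('a)"
    and "proper_space TYPE('a)"
    and "geometric_action G act"
    and "\<exists>\<alpha>\<in>visual_boundary TYPE('a). \<exists>\<beta>\<in>visual_boundary TYPE('a).
           \<exists>\<gamma>\<in>visual_boundary TYPE('a). \<alpha> \<noteq> \<beta> \<and> \<alpha> \<noteq> \<gamma> \<and> \<beta> \<noteq> \<gamma>"
    and "\<exists>M>0. \<forall>\<alpha>\<in>visual_boundary TYPE('a). \<forall>\<beta>\<in>visual_boundary TYPE('a). \<alpha> \<noteq> \<beta> \<longrightarrow>
           (\<exists>(gs :: nat \<Rightarrow> 'g) y0. (\<forall>i. gs i \<in> carrier G) \<and>
              filterlim (\<lambda>i. dist y0 (act (gs i) x0)) at_top sequentially \<and>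
              (\<forall>i. (\<exists>t\<ge>0. ray_to (act (gs i) x0) \<alpha> t \<in> cball y0 M) \<and>
                   (\<exists>t\<ge>0. ray_to (act (gs i) x0) \<beta> t \<in> cball y0 M)))"
  shows "scrambled_boundary G act x0"
proof -
  note grp = assms(1) and cat = assms(2) and pr = assms(3)
  have iso: "isometric_action G act" using assms(4) unfolding geometric_action_def by blast
  obtain K0 where K0: "compact K0" "(\<Union>g\<in>carrier G. act g ` K0) = UNIV"
    using assms(4) unfolding geometric_action_def cocompact_action_def by blast
  obtain D0 where D0: "\<forall>y\<in>K0. dist x0 y \<le> D0"
    using compact_imp_bounded[OF K0(1)] bounded_any_center by blast
  have cover: "\<exists>g\<in>carrier G. dist p (act g x0) \<le> D0" for p
  proof -
    have "p \<in> (\<Union>g\<in>carrier G. act g ` K0)" using K0(2) by simp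
    then obtain g k where g: "g \<in> carrier G" "k \<in> K0" "p = act g k" by blast
    have "dist p (act g x0) = dist k x0" using act_dist[OF iso g(1)] g(3) by simp
    also have "\<dots> \<le> D0" using D0 g(2) by (simp add: dist_commute)
    finally show ?thesis using g(1) by blast
  qed
  have D0pos: "0 \<le> D0" using cover[of x0] by (meson zero_le_dist order.trans)
  obtain M where M: "0 < M" and hypM: "\<forall>\<alpha>\<in>visual_boundary TYPE('a). \<forall>\<beta>\<in>visual_boundary TYPE('a). \<alpha> \<noteq> \<beta> \<longrightarrow>
           (\<exists>(gs :: nat \<Rightarrow> 'g) y0. (\<forall>i. gs i \<in> carrier G) \<and>
              filterlim (\<lambda>i. dist y0 (act (gs i) x0)) at_top sequentially \<and>
              (\<forall>i. (\<exists>t\<ge>0. ray_to (act (gs i) x0) \<alpha> t \<in> cball y0 M) \<and>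
                   (\<exists>t\<ge>0. ray_to (act (gs i) x0) \<beta> t \<in> cball y0 M)))"
    using assms(6) by blast
  show ?thesis unfolding scrambled_boundary_def
  proof (intro ballI impI conjI)
    fix \<alpha> \<beta> assume a: "\<alpha> \<in> visual_boundary TYPE('a)" and b: "\<beta> \<in> visual_boundary TYPE('a)" and ne: "\<alpha> \<noteq> \<beta>"
    define f where "f g = ereal (boundary_dist x0 (boundary_act act g \<alpha>) (boundary_act act g \<beta>))" for g
    have feq: "f g = ereal (Fs (act (inv\<^bsub>G\<^esub> g) x0) \<alpha> \<beta>)" if "g \<in> carrier G" for g
      unfolding f_def using bdist_eq[OF cat pr a b grp iso that] by simp
    have limsup: "0 < Limsup (leaving_finite G) f"
    proof (rule ccontr)
      assume "\<not> 0 < Limsup (leaving_finite G) f"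
      then have L0: "Limsup (leaving_finite G) f \<le> 0" by simp
      have bnd: "del x0 \<alpha> \<beta> t \<le> t * (1 + 2 * D0) / real K" if K: "1 \<le> K" and t: "0 \<le> t" for K :: nat and t
      proof -
        have hK: "0 < ereal ((1/2::real) ^ K)" by simp
        have "eventually (\<lambda>g. f g < ereal ((1/2) ^ K)) (leaving_finite G)"
          by (rule Limsup_lessD) (rule le_less_trans[OF L0 hK])
        then have fin: "finite {g. \<not> (g \<in> carrier G \<longrightarrow> f g < ereal ((1/2) ^ K))}"
          unfolding leaving_finite_def eventually_inf_principal eventually_cofinite .
        define S where "S = {g. \<not> (g \<in> carrier G \<longrightarrow> f g < ereal ((1/2) ^ K))}"
        define R0 where "R0 = (\<Sum>g\<in>S. dist x0 (act (inv\<^bsub>G\<^esub> g) x0))"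
        have Kpos: "0 < real K" using K by simp
        have far: "del p \<alpha> \<beta> t' \<le> 1 + 2 * D0" if p: "R0 + D0 < dist x0 p" and t': "0 \<le> t'" "t' \<le> real K" for p t'
        proof -
          obtain g where g: "g \<in> carrier G" "dist p (act g x0) \<le> D0" using cover by blast
          define q where "q = act g x0"
          have "dist x0 p \<le> dist x0 q + dist q p" by (rule dist_triangle)
          then have Rq: "R0 < dist x0 q" using p g(2) unfolding q_def by (simp add: dist_commute)
          define g' where "g' = inv\<^bsub>G\<^esub> g"
          have g': "g' \<in> carrier G" unfolding g'_def by (rule group.inv_closed[OF grp g(1)])
          have qg': "act (inv\<^bsub>G\<^esub> g') x0 = q" unfolding g'_def q_def using group.inv_inv[OF grp g(1)] by simp
          have "g' \<notin> S"
          proof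
            assume "g' \<in> S"
            then have "dist x0 (act (inv\<^bsub>G\<^esub> g') x0) \<le> R0" unfolding R0_def
              using fin unfolding S_def[symmetric] by (intro member_le_sum) auto
            then show False using Rq qg' by simp
          qed
          then have "f g' < ereal ((1/2) ^ K)" using g' unfolding S_def by simp
          then have Fq: "Fs q \<alpha> \<beta> < (1/2) ^ K" using feq[OF g'] qg' by simp
          have sK: "Suc (K - 1) = K" using K by simp
          have "min (del q \<alpha> \<beta> (real K)) ((1/2) ^ K) \<le> Fs q \<alpha> \<beta>"
            using Fs_term[of q \<alpha> \<beta> "K - 1"] unfolding sK .
          then have dK: "del q \<alpha> \<beta> (real K) < (1/2) ^ K" using Fq by (simp add: min_def split: if_splits)
          have "del q \<alpha> \<beta> t' \<le> (t' / real K) * del q \<alpha> \<beta> (real K)" using del_L1[OF cat pr a b t' Kpos] .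
          also have "\<dots> \<le> del q \<alpha> \<beta> (real K)"
            using t' Kpos by (intro mult_left_le_one_le) (auto simp: del_def)
          also have "\<dots> \<le> 1"
          proof -
            have "(1/2::real) ^ K \<le> 1" by (rule power_le_one) auto
            then show ?thesis using dK by simp
          qed
          finally have "del q \<alpha> \<beta> t' \<le> 1" .
          moreover have "del p \<alpha> \<beta> t' \<le> del q \<alpha> \<beta> t' + 2 * dist p q" using del_move[OF cat pr a b t'(1)] .
          ultimately show ?thesis using g(2) unfolding q_def by simp
        qed
        have E: "0 \<le> 1 + 2 * D0" using D0pos by simp
        show ?thesis using chain[OF cat pr a b Kpos E far t] by blast
      qed
      have zero: "del x0 \<alpha> \<beta> t = 0" if t: "0 \<le> t" for t
      proof -
        have "del x0 \<alpha> \<beta> t \<le> 0"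
        proof (rule field_le_epsilon)
          fix e :: real assume e: "0 < e"
          obtain K :: nat where K: "t * (1 + 2 * D0) / e + 1 \<le> real K" using real_arch_simple by blast
          have q: "0 \<le> t * (1 + 2 * D0) / e" using t D0pos e by simp
          have K1: "1 \<le> K" using K q by linarith
          have Kp: "0 < real K" using K1 by simp
          have "t * (1 + 2 * D0) \<le> e * real K"
          proof -
            have "t * (1 + 2 * D0) / e \<le> real K" using K by linarith
            then show ?thesis using e by (simp add: divide_le_eq mult.commute)
          qed
          then have "t * (1 + 2 * D0) / real K \<le> e" using Kp by (simp add: divide_le_eq mult.commute)
          then show "del x0 \<alpha> \<beta> t \<le> 0 + e" using bnd[OF K1 t] by simp
        qed
        then show ?thesis unfolding del_def by (simp add: dist_le_zero_iff)
      qed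
      have eqr: "ray_to x0 \<alpha> = ray_to x0 \<beta>"
      proof
        fix t :: real
        show "ray_to x0 \<alpha> t = ray_to x0 \<beta> t"
        proof (cases "t < 0")
          case True
          then show ?thesis using ray_to_props[OF cat pr a] ray_to_props[OF cat pr b]
            unfolding geodesic_ray_def by simp
        next
          case False
          then show ?thesis using zero[of t] unfolding del_def by simp
        qed
      qed
      have "ray_to x0 \<alpha> \<in> \<beta>" using eqr ray_to_props(1)[OF cat pr b] by simp
      then have "\<alpha> = \<beta>" using boundary_eq[OF a b ray_to_props(1)[OF cat pr a]] by simp
      then show False using ne by simp
    qed
    have ge: "0 \<le> Liminf (leaving_finite G) f"
      by (rule Liminf_bounded) (simp add: f_def bdist_nonneg)
    have le: "Liminf (leaving_finite G) f \<le> 0"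
    proof -
      obtain gs :: "nat \<Rightarrow> 'g" and y0 where gs: "\<forall>i. gs i \<in> carrier G"
        and flim: "filterlim (\<lambda>i. dist y0 (act (gs i) x0)) at_top sequentially"
        and near: "\<forall>i. (\<exists>t\<ge>0. ray_to (act (gs i) x0) \<alpha> t \<in> cball y0 M) \<and>
                   (\<exists>t\<ge>0. ray_to (act (gs i) x0) \<beta> t \<in> cball y0 M)"
        using hypM[rule_format, OF a b ne] by (elim exE conjE) blast
      define p where "p i = act (gs i) x0" for i
      define h where "h i = inv\<^bsub>G\<^esub> (gs i)" for i
      have hcar: "h i \<in> carrier G" for i unfolding h_def using group.inv_closed[OF grp] gs by blast
      have hinv: "act (inv\<^bsub>G\<^esub> (h i)) x0 = p i" for i
        unfolding h_def p_def using group.inv_inv[OF grp] gs by simp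
      have flim': "filterlim (\<lambda>i. dist y0 (p i)) at_top sequentially" unfolding p_def by (rule flim)
      have near': "(\<exists>t\<ge>0. ray_to (p i) \<alpha> t \<in> cball y0 M) \<and> (\<exists>t\<ge>0. ray_to (p i) \<beta> t \<in> cball y0 M)" for i
        unfolding p_def by (rule spec[OF near])
      have limF: "(\<lambda>i. Fs (p i) \<alpha> \<beta>) \<longlonglongrightarrow> 0"
        by (rule liminf_seq[OF cat pr a b M flim' near'])
      have fh: "f (h i) = ereal (Fs (p i) \<alpha> \<beta>)" for i using feq[OF hcar[of i]] hinv[of i] by simp
      have limf: "(\<lambda>i. f (h i)) \<longlonglongrightarrow> 0"
        unfolding fh zero_ereal_def by (rule tendsto_ereal[OF limF])
      have evh: "eventually (\<lambda>i. P (h i)) sequentially" if ev: "eventually P (leaving_finite G)" for P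
      proof -
        have fin: "finite {g. \<not> (g \<in> carrier G \<longrightarrow> P g)}"
          using ev unfolding leaving_finite_def eventually_inf_principal eventually_cofinite .
        define S where "S = {g. \<not> (g \<in> carrier G \<longrightarrow> P g)}"
        define R where "R = (\<Sum>g\<in>S. dist y0 (act (inv\<^bsub>G\<^esub> g) x0))"
        have "eventually (\<lambda>i. R + 1 \<le> dist y0 (p i)) sequentially"
          using flim unfolding filterlim_at_top p_def by blast
        then show ?thesis
        proof (rule eventually_mono)
          fix i assume Ri: "R + 1 \<le> dist y0 (p i)"
          have "h i \<notin> S"
          proof
            assume "h i \<in> S"
            then have "dist y0 (act (inv\<^bsub>G\<^esub> (h i)) x0) \<le> R" unfolding R_def
              using fin unfolding S_def[symmetric] by (intro member_le_sum) auto
            then show False using Ri hinv[of i] by simp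
          qed
          then show "P (h i)" using hcar[of i] unfolding S_def by simp
        qed
      qed
      show ?thesis
      proof (rule Liminf_least)
        fix P assume ev: "eventually P (leaving_finite G)"
        show "(INF x\<in>Collect P. f x) \<le> 0"
        proof (rule dense_ge)
          fix w :: ereal assume w: "0 < w"
          have "eventually (\<lambda>i. f (h i) < w) sequentially" using order_tendstoD(2)[OF limf w] .
          then have "eventually (\<lambda>i. f (h i) < w \<and> P (h i)) sequentially" using evh[OF ev] by (rule eventually_conj)
          then obtain N where "\<forall>i\<ge>N. f (h i) < w \<and> P (h i)" unfolding eventually_sequentially by blast
          then have hN: "f (h N) < w" "P (h N)" by auto
          have "(INF x\<in>Collect P. f x) \<le> f (h N)" using hN(2) by (intro INF_lower) simp
          then show "(INF x\<in>Collect P. f x) \<le> w" using hN(1) by simp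
        qed
      qed
    qed
    show "0 < Limsup (leaving_finite G)
          (\<lambda>g. ereal (boundary_dist x0 (boundary_act act g \<alpha>) (boundary_act act g \<beta>)))"
      using limsup unfolding f_def .
    show "Liminf (leaving_finite G)
          (\<lambda>g. ereal (boundary_dist x0 (boundary_act act g \<alpha>) (boundary_act act g \<beta>))) = 0"
      using ge le unfolding f_def by simp
  qed
qed

end
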